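(* Let $G$ be a simple graph on $n=2m\ge 4$ vertices such that $G$ or its complement $\bar{G}$ is $mK_2$ (the disjoint union of $m$ copies of $K_2$). Then for every vertex $v$, $$TDV_G(v)+TDV_{\bar{G}}(v)=n-1.$$
   Context: For a graph $H$ without isolated vertices, a set $D\subseteq V(H)$ is a total dominating set if every vertex of $H$ has a neighbor in $D$; $\gamma_t(H)$ is the minimum size of such a set, a minimum one is a $\gamma_t(H)$-set, and $TDV_H(v)$ is the number of $\gamma_t(H)$-sets containing $v$. $\bar{G}$ is the complement of $G$ on the same vertex set. *)

theory Defs
  imports Main
begin

definition simple_graph :: "'a set \<Rightarrow> ('a \<Rightarrow> 'a \<Rightarrow> bool) \<Rightarrow> bool" where
  "simple_graph V E \<longleftrightarrow> finite V \<and>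
     (\<forall>u v. E u v \<longrightarrow> u \<in> V \<and> v \<in> V \<and> u \<noteq> v) \<and>
     (\<forall>u v. E u v \<longrightarrow> E v u)"

definition complement :: "'a set \<Rightarrow> ('a \<Rightarrow> 'a \<Rightarrow> bool) \<Rightarrow> 'a \<Rightarrow> 'a \<Rightarrow> bool" where
  "complement V E u v \<longleftrightarrow> u \<in> V \<and> v \<in> V \<and> u \<noteq> v \<and> \<not> E u v"

definition is_matching_graph :: "'a set \<Rightarrow> ('a \<Rightarrow> 'a \<Rightarrow> bool) \<Rightarrow> bool" where
  "is_matching_graph V E \<longleftrightarrow> (\<exists>P. \<Union>P = V \<and>
     (\<forall>B\<in>P. card B = 2) \<and>
     (\<forall>B\<in>P. \<forall>C\<in>P. B \<noteq> C \<longrightarrow> B \<inter> C = {}) \<and>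
     (\<forall>u v. E u v \<longleftrightarrow> (\<exists>B\<in>P. u \<in> B \<and> v \<in> B \<and> u \<noteq> v)))"

definition total_dom_set :: "'a set \<Rightarrow> ('a \<Rightarrow> 'a \<Rightarrow> bool) \<Rightarrow> 'a set \<Rightarrow> bool" where
  "total_dom_set V E D \<longleftrightarrow> D \<subseteq> V \<and> (\<forall>v\<in>V. \<exists>u\<in>D. E v u)"

definition gamma_t :: "'a set \<Rightarrow> ('a \<Rightarrow> 'a \<Rightarrow> bool) \<Rightarrow> nat" where
  "gamma_t V E = (LEAST k. \<exists>D. total_dom_set V E D \<and> card D = k)"

definition gamma_t_sets :: "'a set \<Rightarrow> ('a \<Rightarrow> 'a \<Rightarrow> bool) \<Rightarrow> 'a set set" where
  "gamma_t_sets V E = {D. total_dom_set V E D \<and> card D = gamma_t V E}"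

definition TDV :: "'a set \<Rightarrow> ('a \<Rightarrow> 'a \<Rightarrow> bool) \<Rightarrow> 'a \<Rightarrow> nat" where
  "TDV V E v = card {D \<in> gamma_t_sets V E. v \<in> D}"

end

theory Submission
  imports Defs
begin

definition mprops :: "'a set \<Rightarrow> ('a \<Rightarrow> 'a \<Rightarrow> bool) \<Rightarrow> bool" where
  "mprops V M \<longleftrightarrow> (\<forall>u v. M u v \<longrightarrow> u\<in>V \<and> v\<in>V \<and> u\<noteq>v) \<and> (\<forall>u v. M u v \<longrightarrow> M v u)
     \<and> (\<forall>v\<in>V. \<exists>w. M v w) \<and> (\<forall>v w w'. M v w \<longrightarrow> M v w' \<longrightarrow> w = w')"

lemma matching_mprops:
  assumes "is_matching_graph V M" shows "mprops V M"
proof -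
  obtain P where U: "\<Union>P = V" and C: "\<forall>B\<in>P. card B = 2"
    and D: "\<forall>B\<in>P. \<forall>C\<in>P. B \<noteq> C \<longrightarrow> B \<inter> C = {}"
    and M: "\<forall>u v. M u v \<longleftrightarrow> (\<exists>B\<in>P. u \<in> B \<and> v \<in> B \<and> u \<noteq> v)"
    using assms unfolding is_matching_graph_def by (elim exE conjE) simp
  have 1: "\<forall>u v. M u v \<longrightarrow> u\<in>V \<and> v\<in>V \<and> u\<noteq>v" using M U by blast
  have 2: "\<forall>u v. M u v \<longrightarrow> M v u"
  proof (intro allI impI)
    fix u v assume "M u v"
    then obtain B where "B\<in>P" "u \<in> B" "v \<in> B" "u \<noteq> v" using M by blast
    then show "M v u" using M by blast
  qed
  have 34: "(\<forall>v\<in>V. \<exists>w. M v w) \<and> (\<forall>v w w'. M v w \<longrightarrow> M v w' \<longrightarrow> w = w')"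
proof (intro conjI)
  show "\<forall>v\<in>V. \<exists>w. M v w"
  proof
    fix v assume "v \<in> V"
    then obtain B where B: "B \<in> P" "v \<in> B" using U by blast
    have "card B = 2" using C B(1) by blast
    then obtain x y where xy: "B = {x,y}" "x \<noteq> y" by (auto simp: card_2_iff)
    show "\<exists>w. M v w"
    proof (cases "v = x")
      case True
      then have "M v y" using M B xy by auto
      then show ?thesis ..
    next
      case False
      then have "M v x" using M B xy by auto
      then show ?thesis ..
    qed
  qed
  show "\<forall>v w w'. M v w \<longrightarrow> M v w' \<longrightarrow> w = w'"
  proof (intro allI impI)
    fix v w w' assume a: "M v w" "M v w'"
    obtain B where B: "B\<in>P" "v\<in>B" "w\<in>B" "v\<noteq>w" using a(1) M by blast
    obtain B' where B': "B'\<in>P" "v\<in>B'" "w'\<in>B'" "v\<noteq>w'" using a(2) M by blast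
    have "B = B'" using D B B' by blast
    have "card B = 2" using C B(1) by blast
    then obtain x y where xy: "B = {x,y}" "x \<noteq> y" by (auto simp: card_2_iff)
    show "w = w'" using B B' \<open>B = B'\<close> xy by auto
  qed
qed
  show ?thesis unfolding mprops_def using 1 2 34 by (intro conjI) simp_all
qed

lemma gamma_eq:
  assumes "total_dom_set V E D0" "card D0 = k" "\<forall>D. total_dom_set V E D \<longrightarrow> k \<le> card D"
  shows "gamma_t V E = k"
  unfolding gamma_t_def
  apply (rule Least_equality)
  using assms by auto

lemma TDV_M:
  assumes "mprops V M" "v \<in> V"
  shows "TDV V M v = 1"
proof -
  have td: "total_dom_set V M D \<longleftrightarrow> D = V" for D
  proof
    assume a: "total_dom_set V M D"
    have "V \<subseteq> D"
    proof
      fix x assume "x \<in> V"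
      then obtain p where "M x p" using assms(1) unfolding mprops_def by blast
      then have "p \<in> V" "M p x" using assms(1) unfolding mprops_def by blast+
      then obtain u where "u \<in> D" "M p u" using a unfolding total_dom_set_def by blast
      then show "x \<in> D" using \<open>M p x\<close> assms(1) unfolding mprops_def by metis
    qed
    then show "D = V" using a unfolding total_dom_set_def by blast
  next
    assume "D = V" then show "total_dom_set V M D"
      using assms(1) unfolding total_dom_set_def mprops_def by blast
  qed
  have g: "gamma_t V M = card V" by (rule gamma_eq[of _ _ V]) (auto simp: td)
  have "gamma_t_sets V M = {V}" unfolding gamma_t_sets_def g td by auto
  then have "{D \<in> gamma_t_sets V M. v \<in> D} = {V}" using assms(2) by auto
  then show ?thesis unfolding TDV_def by simp
qed

lemma TDV_C:
  assumes "mprops V M" "v \<in> V" "finite V" "card V \<ge> 4"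
  shows "TDV V (complement V M) v = card V - 2"
proof -
  have irr: "\<And>u w. M u w \<Longrightarrow> u\<in>V \<and> w\<in>V \<and> u\<noteq>w" and sym: "\<And>u w. M u w \<Longrightarrow> M w u"
    and ex: "\<And>x. x\<in>V \<Longrightarrow> \<exists>w. M x w" and un: "\<And>x w w'. M x w \<Longrightarrow> M x w' \<Longrightarrow> w = w'"
    using assms(1) unfolding mprops_def by blast+
  let ?C = "complement V M"
  obtain p where p: "M v p" using ex assms(2) by blast
  have pV: "p \<in> V" "p \<noteq> v" using irr[OF p] by auto
  have good: "total_dom_set V ?C {v,w}" if w: "w \<in> V" "w \<noteq> v" "w \<noteq> p" for w
    unfolding total_dom_set_def
  proof (intro conjI ballI)
    show "{v,w} \<subseteq> V" using w assms(2) by auto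
  next
    fix x assume x: "x \<in> V"
    show "\<exists>u\<in>{v,w}. ?C x u"
    proof (cases "x = v")
      case True
      have "\<not> M v w" using un[OF p] w by blast
      then show ?thesis using True w x unfolding complement_def by auto
    next
      case False
      show ?thesis
      proof (cases "M x v")
        case True
        have "x = p" using un[OF p sym[OF True]] by simp
        have "\<not> M p w" using un[OF sym[OF p]] w by blast
        then show ?thesis using \<open>x = p\<close> w x unfolding complement_def by auto
      next
        case False
        then show ?thesis using \<open>x \<noteq> v\<close> x assms(2) unfolding complement_def by auto
      qed
    qed
  qed
  have lb: "2 \<le> card D" if a: "total_dom_set V ?C D" for D
  proof -
    have DV: "D \<subseteq> V" using a unfolding total_dom_set_def by blast
    have fD: "finite D" using DV assms(3) finite_subset by blast
    obtain u where u: "u \<in> D" using a assms(2) unfolding total_dom_set_def by blast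
    have "card D \<noteq> 1"
    proof
      assume "card D = 1"
      then obtain z where "D = {z}" using card_1_singletonE by blast
      then have "z \<in> V" "\<exists>u\<in>D. ?C z u" using a unfolding total_dom_set_def by auto
      then show False using \<open>D = {z}\<close> unfolding complement_def by auto
    qed
    moreover have "card D \<noteq> 0" using fD u by auto
    ultimately show ?thesis by linarith
  qed
  have "V - {v,p} \<noteq> {}"
  proof
    assume "V - {v,p} = {}"
    then have "V \<subseteq> {v,p}" by blast
    then have "card V \<le> card {v,p}" by (intro card_mono) auto
    also have "\<dots> \<le> 2" by (simp add: card_insert_le_m1)
    finally show False using assms(4) by simp
  qed
  then obtain w0 where w0: "w0 \<in> V" "w0 \<noteq> v" "w0 \<noteq> p" by blast
  have g: "gamma_t V ?C = 2"
    by (rule gamma_eq[OF good[OF w0]]) (use w0 lb in auto)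
  have S: "{D \<in> gamma_t_sets V ?C. v \<in> D} = (\<lambda>w. {v,w}) ` (V - {v,p})"
  proof (rule set_eqI, rule iffI)
    fix D assume "D \<in> {D \<in> gamma_t_sets V ?C. v \<in> D}"
    then have a: "total_dom_set V ?C D" "card D = 2" "v \<in> D"
      unfolding gamma_t_sets_def g by auto
    obtain x y where xy: "D = {x,y}" "x \<noteq> y" using a(2) by (auto simp: card_2_iff)
    obtain w where Dw: "D = {v,w}" "w \<noteq> v"
    proof (cases "v = x")
      case True then show ?thesis using that xy by blast
    next
      case False then have "v = y" using a(3) xy by blast
      then show ?thesis using that[of x] xy by auto
    qed
    have wV: "w \<in> V" using a Dw unfolding total_dom_set_def by auto
    have "w \<noteq> p"
    proof
      assume "w = p"
      then obtain u where "u \<in> {v,p}" "?C v u" using a Dw assms(2) unfolding total_dom_set_def by blast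
      then show False using p unfolding complement_def by auto
    qed
    then show "D \<in> (\<lambda>w. {v,w}) ` (V - {v,p})" using Dw wV by blast
  next
    fix D assume "D \<in> (\<lambda>w. {v,w}) ` (V - {v,p})"
    then obtain w where "w \<in> V" "w \<noteq> v" "w \<noteq> p" "D = {v,w}" by blast
    then show "D \<in> {D \<in> gamma_t_sets V ?C. v \<in> D}"
      using good unfolding gamma_t_sets_def g by auto
  qed
  have inj: "inj_on (\<lambda>w. {v,w}) (V - {v,p})"
    by (rule inj_onI) (auto simp: doubleton_eq_iff)
  have "card (V - {v,p}) = card V - 2"
    using assms(2) pV assms(3) by (simp add: card_Diff_subset)
  then show ?thesis unfolding TDV_def S card_image[OF inj] .
qed

theorem proposition2p11:
  fixes V :: "'a set" and E :: "'a \<Rightarrow> 'a \<Rightarrow> bool" and m :: nat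
  assumes "simple_graph V E"
    and "card V = 2 * m" and "2 * m \<ge> 4"
    and "is_matching_graph V E \<or> is_matching_graph V (complement V E)"
  shows "\<forall>v\<in>V. TDV V E v + TDV V (complement V E) v = card V - 1"
proof
  fix v assume v: "v \<in> V"
  have f: "finite V" and c4: "card V \<ge> 4" using assms unfolding simple_graph_def by auto
  have cc: "complement V (complement V E) = E"
    using assms(1) unfolding simple_graph_def complement_def by (auto intro!: ext)
  show "TDV V E v + TDV V (complement V E) v = card V - 1"
    using assms(4)
  proof
    assume "is_matching_graph V E"
    then have m: "mprops V E" by (rule matching_mprops)
    show ?thesis using TDV_M[OF m v] TDV_C[OF m v f c4] c4 by simp
  next
    assume "is_matching_graph V (complement V E)"
    then have m: "mprops V (complement V E)" by (rule matching_mprops)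
    have "TDV V E v = card V - 2" using TDV_C[OF m v f c4] cc by simp
    then show ?thesis using TDV_M[OF m v] c4 by simp
  qed
qed

end
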